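(* Let $n=2m$. Let $S_1=\{\bm{v}\in\mathbb{F}_{q^n}^n:\mathcal{P}_n(\bm{v})\in GL_n(\mathbb{F}_{q^n})\}$ and $S_2=\{\bm{v}\in\mathbb{F}_{q^m}^n:\mathcal{P}_n(\bm{v})\in GL_n(\mathbb{F}_{q^m})\}$. Let $T=\{\bm{v}\in\mathbb{F}_{q^n}^n:\mathrm{wt}_{q^m}(\bm{v})=2\text{ and }\mathcal{P}_n(\bm{v})\in GL_n(\mathbb{F}_{q^n})\}$ and let $\mathcal{N}$ be the number of distinct equivalence classes $\overline{\bm{v}}$ with $\bm{v}\in T$. Then $$\mathcal{N}=\frac{|S_1|}{|S_2|}-q^m-1.$$
   Context: $q$ is a prime power (the paper takes $q$ a power of $2$). For $\bm{v}=(v_0,\dots,v_{n-1})$, the circulant matrix $\mathcal{P}_n(\bm{v})$ is the $n\times n$ matrix with rows $(v_0,\dots,v_{n-1}),(v_{n-1},v_0,\dots,v_{n-2}),\dots,(v_1,\dots,v_{n-1},v_0)$ (each row the cyclic right shift of the previous one). $\mathcal{P}_n(\mathbb{F}_{q^m})$ denotes the set of $n\times n$ circulant matrices over $\mathbb{F}_{q^m}$. For $\bm{v}\in\mathbb{F}_{q^n}^n$, $\mathrm{wt}_{q^m}(\bm{v})$ is the dimension over $\mathbb{F}_{q^m}$ of the $\mathbb{F}_{q^m}$-linear span of the components of $\bm{v}$ (so it is $0,1$ or $2$). The equivalence class of $\bm{v}\in\mathbb{F}_{q^n}^n$ is $\overline{\bm{v}}=\{\bm{v}Q: Q\in\mathcal{P}_n(\mathbb{F}_{q^m})\cap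 GL_n(\mathbb{F}_{q^m})\}$. *)

theory Defs
  imports Main "HOL-Computational_Algebra.Primes" "Jordan_Normal_Form.Matrix"
begin

definition circulant :: "nat \<Rightarrow> 'a vec \<Rightarrow> 'a mat" where
  "circulant n v = mat n n (\<lambda>(i,j). v $ ((j + n - i) mod n))"

definition mat_over :: "'a set \<Rightarrow> 'a mat \<Rightarrow> bool" where
  "mat_over K A \<longleftrightarrow> (\<forall>i<dim_row A. \<forall>j<dim_col A. A $$ (i,j) \<in> K)"

definition GL_over :: "'a::field set \<Rightarrow> nat \<Rightarrow> 'a mat set" where
  "GL_over K n = {A \<in> carrier_mat n n. mat_over K A \<and>
      (\<exists>B \<in> carrier_mat n n. mat_over K B \<and> A * B = 1\<^sub>m n \<and> B * A = 1\<^sub>m n)}"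

definition is_subfield :: "'a::field set \<Rightarrow> bool" where
  "is_subfield K \<longleftrightarrow> 0 \<in> K \<and> 1 \<in> K \<and> (\<forall>x\<in>K. \<forall>y\<in>K. x + y \<in> K \<and> x * y \<in> K \<and> x - y \<in> K)
     \<and> (\<forall>x\<in>K. x \<noteq> 0 \<longrightarrow> inverse x \<in> K)"

definition K_span :: "'a::field set \<Rightarrow> 'a set \<Rightarrow> 'a set" where
  "K_span K B = {\<Sum>b\<in>B. c b * b | c. \<forall>b\<in>B. c b \<in> K}"

definition wt_over :: "'a::field set \<Rightarrow> 'a vec \<Rightarrow> nat" where
  "wt_over K v = (LEAST d. \<exists>B. finite B \<and> card B = d \<and>
       (\<forall>i<dim_vec v. v $ i \<in> K_span K B))"

definition vec_mat_mult :: "'a::semiring_0 vec \<Rightarrow> 'a mat \<Rightarrow> 'a vec" where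
  "vec_mat_mult v Q = vec (dim_col Q) (\<lambda>j. v \<bullet> col Q j)"

definition eq_class :: "'a::field set \<Rightarrow> nat \<Rightarrow> 'a vec \<Rightarrow> 'a vec set" where
  "eq_class K n v = {vec_mat_mult v Q | Q. \<exists>w \<in> carrier_vec n. (\<forall>i<n. w $ i \<in> K)
        \<and> Q = circulant n w \<and> Q \<in> GL_over K n}"

end

theory Submission
  imports Defs
begin


lemma idx_inv: "i < n \<Longrightarrow> j < n \<Longrightarrow> (j + n - ((j + n - i) mod n)) mod (n::nat) = i"
proof (cases "i \<le> j")
  case True
  assume "i<n" "j<n"
  then have "(j + n - i) mod n = j - i" using True
    by (metis add.commute add_diff_assoc less_imp_diff_less mod_add_self2 mod_less)
  then show ?thesis using True \<open>i<n\<close> \<open>j<n\<close> by simp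
next
  case False
  assume "i<n" "j<n"
  then have "(j + n - i) mod n = j + n - i" using False by simp
  then show ?thesis using False \<open>i<n\<close> \<open>j<n\<close> by simp
qed

lemma idx_zero: "i < n \<Longrightarrow> j < n \<Longrightarrow> (j + n - i) mod (n::nat) = 0 \<longleftrightarrow> i = j"
  using idx_inv[of i n j] by auto

lemma idx_bij: "j < n \<Longrightarrow> bij_betw (\<lambda>i. (j + n - i) mod n) {..<n::nat} {..<n}"
  apply (rule bij_betw_byWitness[where f'="\<lambda>i. (j + n - i) mod n"])
  using idx_inv by auto

lemma int_mod1: "(((a::int) + i) mod n + n - i) mod n = a mod n"
proof -
  have "((a + i) mod n + n - i) mod n = ((a + i) mod n + (n - i)) mod n" by (simp add: algebra_simps)
  also have "\<dots> = (a + i + (n - i)) mod n" by (simp add: mod_add_left_eq)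
  also have "\<dots> = a mod n" by simp
  finally show ?thesis .
qed

lemma int_mod2: "(((a::int) + n - i) mod n + n - ((k + n - i) mod n)) mod n = (a + n - k) mod n"
proof -
  have "(((a::int) + n - i) mod n + n - ((k + n - i) mod n)) mod n = (((a::int) + n - i) mod n + n - ((k + n - i))) mod n"
    by (simp add: mod_diff_right_eq)
  also have "\<dots> = (((a::int) + n - i) mod n + (n - (k + n - i))) mod n" by (simp add: algebra_simps)
  also have "\<dots> = (((a::int) + n - i) + (n - (k + n - i))) mod n" by (simp add: mod_add_left_eq)
  also have "\<dots> = (a + n - k) mod n" by (simp add: algebra_simps)
  finally show ?thesis .
qed

lemma int_mod3: "(((a::int) + n - i) mod n + i) mod n = a mod n"
proof -
  have "(((a::int) + n - i) mod n + i) mod n = (((a::int) + n - i) + i) mod n" by (simp add: mod_add_left_eq)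
  also have "\<dots> = a mod n" by simp
  finally show ?thesis .
qed

lemma shift_bij: "i < n \<Longrightarrow> bij_betw (\<lambda>k. (k + n - i) mod n) {..<n::nat} {..<n}"
proof (rule bij_betw_byWitness[where f'="\<lambda>l. (l + i) mod n"])
  assume i: "i < n"
  show "\<forall>a\<in>{..<n}. (((a + n - i) mod n) + i) mod n = a"
  proof
    fix a assume "a \<in> {..<n}"
    then have a: "a < n" by simp
    have "int ((((a + n - i) mod n) + i) mod n) = (((int a + int n - int i) mod int n) + int i) mod int n"
      using i by (simp add: zmod_int of_nat_diff)
    also have "\<dots> = int a mod int n" by (rule int_mod3)
    also have "\<dots> = int a" using a by simp
    finally show "(((a + n - i) mod n) + i) mod n = a" by simp
  qed
  show "\<forall>a\<in>{..<n}. ((a + i) mod n + n - i) mod n = a"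
  proof
    fix a assume "a \<in> {..<n}"
    then have a: "a < n" by simp
    have le: "i \<le> (a + i) mod n + n" using i by simp
    have "int (((a + i) mod n + n - i) mod n) = (((int a + int i) mod int n) + int n - int i) mod int n"
      using i le by (simp add: zmod_int of_nat_diff)
    also have "\<dots> = int a mod int n" by (rule int_mod1)
    also have "\<dots> = int a" using a by simp
    finally show "((a + i) mod n + n - i) mod n = a" by simp
  qed
qed auto

lemma idx3: "i < n \<Longrightarrow> j < n \<Longrightarrow> k < n \<Longrightarrow>
  ((j + n - i) mod n + n - (k + n - i) mod n) mod n = (j + n - (k::nat)) mod n"
proof -
  assume a: "i < n" "j < n" "k < n"
  have "(k + n - i) mod n < n" using a by simp
  then have le: "(k + n - i) mod n \<le> (j + n - i) mod n + n" by linarith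
  have "int (((j + n - i) mod n + n - (k + n - i) mod n) mod n)
     = ((int j + int n - int i) mod int n + int n - (int k + int n - int i) mod int n) mod int n"
    using a le by (simp add: zmod_int of_nat_diff less_imp_le_nat)
  also have "\<dots> = (int j + int n - int k) mod int n"
    by (rule int_mod2)
  also have "\<dots> = int ((j + n - k) mod n)" using a by (simp add: zmod_int of_nat_diff)
  finally show ?thesis by simp
qed

definition conv :: "nat \<Rightarrow> 'a::comm_ring_1 vec \<Rightarrow> 'a vec \<Rightarrow> 'a vec" where
  "conv n v w = vec n (\<lambda>j. \<Sum>i<n. v $ i * w $ ((j + n - i) mod n))"

lemma conv_carrier[simp]: "conv n v w \<in> carrier_vec n" "dim_vec (conv n v w) = n"
  by (auto simp: conv_def)

lemma conv_index: "j < n \<Longrightarrow> conv n v w $ j = (\<Sum>i<n. v $ i * w $ ((j + n - i) mod n))"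
  by (simp add: conv_def)

lemma conv_comm: "conv n v w = conv n w v"
proof (rule eq_vecI)
  fix j assume "j < dim_vec (conv n w v)"
  then have j: "j < n" by simp
  have "(\<Sum>k<n. w $ k * v $ ((j + n - k) mod n)) =
        (\<Sum>i<n. w $ ((j + n - i) mod n) * v $ ((j + n - ((j + n - i) mod n)) mod n))"
    using sum.reindex_bij_betw[OF idx_bij[OF j], of "\<lambda>k. w $ k * v $ ((j + n - k) mod n)"] by simp
  also have "\<dots> = (\<Sum>i<n. v $ i * w $ ((j + n - i) mod n))"
    by (rule sum.cong) (auto simp: idx_inv j mult.commute)
  finally show "conv n v w $ j = conv n w v $ j" using j by (simp add: conv_index)
qed simp

lemma vmm_circ: "dim_vec v = n \<Longrightarrow> vec_mat_mult v (circulant n w) = conv n v w"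
  unfolding vec_mat_mult_def circulant_def conv_def
  by (rule eq_vecI) (auto simp: scalar_prod_def atLeast0LessThan)

lemma vmm_assoc: "dim_vec v = dim_row A \<Longrightarrow> dim_col A = dim_row B \<Longrightarrow>
   vec_mat_mult (vec_mat_mult v A) B = vec_mat_mult v (A * B)"
proof (rule eq_vecI)
  assume d: "dim_vec v = dim_row A" "dim_col A = dim_row B"
  fix j assume "j < dim_vec (vec_mat_mult v (A * B))"
  then have j: "j < dim_col B" by (simp add: vec_mat_mult_def)
  have "vec_mat_mult (vec_mat_mult v A) B $ j = (\<Sum>k<dim_col A. (\<Sum>i<dim_row A. v $ i * A $$ (i,k)) * B $$ (k,j))"
    using d j by (simp add: vec_mat_mult_def scalar_prod_def atLeast0LessThan col_def)
  also have "\<dots> = (\<Sum>k<dim_col A. \<Sum>i<dim_row A. v $ i * (A $$ (i,k) * B $$ (k,j)))"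
    by (simp add: sum_distrib_right mult.assoc)
  also have "\<dots> = (\<Sum>i<dim_row A. \<Sum>k<dim_col A. v $ i * (A $$ (i,k) * B $$ (k,j)))"
    by (rule sum.swap)
  also have "\<dots> = vec_mat_mult v (A * B) $ j"
    using d j by (simp add: vec_mat_mult_def scalar_prod_def atLeast0LessThan col_def row_def sum_distrib_left)
  finally show "vec_mat_mult (vec_mat_mult v A) B $ j = vec_mat_mult v (A * B) $ j" .
qed (simp add: vec_mat_mult_def)

lemma vmm_one: "dim_vec v = n \<Longrightarrow> vec_mat_mult v (1\<^sub>m n) = (v :: 'a::comm_ring_1 vec)"
proof (rule eq_vecI)
  assume d: "dim_vec v = n"
  fix j assume "j < dim_vec v"
  then have j: "j < n" using d by simp
  have "vec_mat_mult v (1\<^sub>m n) $ j = (\<Sum>i<n. v $ i * (if i = j then 1 else 0))"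
    using d j by (simp add: vec_mat_mult_def scalar_prod_def atLeast0LessThan col_def)
  also have "\<dots> = v $ j" using j by (simp add: if_distrib cong: if_cong)
  finally show "vec_mat_mult v (1\<^sub>m n) $ j = v $ j" .
qed (simp add: vec_mat_mult_def)

lemma circ_mult: "circulant n v * circulant n w = circulant n (conv n v w)"
proof (rule eq_matI)
  fix i j assume "i < dim_row (circulant n (conv n v w))" "j < dim_col (circulant n (conv n v w))"
  then have i: "i < n" and j: "j < n" by (auto simp: circulant_def)
  have "(circulant n v * circulant n w) $$ (i,j) = (\<Sum>k<n. v $ ((k + n - i) mod n) * w $ ((j + n - k) mod n))"
    using i j by (simp add: circulant_def scalar_prod_def atLeast0LessThan col_def row_def)
  also have "\<dots> = (\<Sum>k<n. v $ ((k + n - i) mod n) * w $ (((j + n - i) mod n + n - (k + n - i) mod n) mod n))"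
    by (rule sum.cong) (auto simp: idx3 i j)
  also have "\<dots> = (\<Sum>l<n. v $ l * w $ (((j + n - i) mod n + n - l) mod n))"
    using sum.reindex_bij_betw[OF shift_bij[OF i], of "\<lambda>l. v $ l * w $ (((j + n - i) mod n + n - l) mod n)"]
    by simp
  also have "\<dots> = circulant n (conv n v w) $$ (i,j)"
    using i j by (simp add: circulant_def conv_index)
  finally show "(circulant n v * circulant n w) $$ (i,j) = circulant n (conv n v w) $$ (i,j)" .
qed (auto simp: circulant_def)

lemma conv_assoc: "dim_vec v = n \<Longrightarrow> conv n (conv n v w) x = conv n v (conv n w x)"
proof -
  assume d: "dim_vec v = n"
  have "conv n (conv n v w) x = vec_mat_mult (vec_mat_mult v (circulant n w)) (circulant n x)"
    using d by (simp add: vmm_circ)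
  also have "\<dots> = vec_mat_mult v (circulant n w * circulant n x)"
    using d by (simp add: vmm_assoc circulant_def)
  also have "\<dots> = conv n v (conv n w x)" using d by (simp add: circ_mult vmm_circ)
  finally show ?thesis .
qed

lemma conv_unit: assumes n: "n > 0" and d: "dim_vec v = n" shows "conv n v (unit_vec n 0) = v"
proof (rule eq_vecI)
  fix j assume "j < dim_vec v"
  then have j: "j < n" using d by simp
  have "conv n v (unit_vec n 0) $ j = (\<Sum>i<n. v $ i * (if i = j then 1 else 0))"
    using j n by (simp add: conv_index idx_zero cong: if_cong)
  also have "\<dots> = v $ j" using j by (simp add: if_distrib cong: if_cong)
  finally show "conv n v (unit_vec n 0) $ j = v $ j" .
qed (simp add: d)

lemma circ_unit: "n > 0 \<Longrightarrow> circulant n (unit_vec n 0 :: 'a::comm_ring_1 vec) = 1\<^sub>m n"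
  by (rule eq_matI) (auto simp: circulant_def idx_zero)

lemma conv_smult: "dim_vec v = n \<Longrightarrow> conv n (a \<cdot>\<^sub>v v) w = a \<cdot>\<^sub>v conv n v w"
  by (rule eq_vecI) (auto simp: conv_index sum_distrib_left mult.assoc)

lemma subfield_sum: "is_subfield K \<Longrightarrow> (\<And>i. i \<in> A \<Longrightarrow> f i \<in> K) \<Longrightarrow> sum f A \<in> K"
proof (induction A rule: infinite_finite_induct)
  case (infinite A) then show ?case by (simp add: is_subfield_def)
next
  case empty then show ?case by (simp add: is_subfield_def)
next
  case (insert x F) then show ?case by (simp add: is_subfield_def)
qed

lemma conv_overK: "is_subfield K \<Longrightarrow> (\<forall>i<n. v $ i \<in> K) \<Longrightarrow> (\<forall>i<n. w $ i \<in> K) \<Longrightarrow>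
   \<forall>i<n. conv n v w $ i \<in> K"
  by (auto simp: conv_index is_subfield_def intro!: subfield_sum)



lemma subfield_UNIV: "is_subfield UNIV" by (simp add: is_subfield_def)

lemma mat_over_circ: "(\<forall>i<n. v $ i \<in> K) \<Longrightarrow> mat_over K (circulant n v)"
  unfolding mat_over_def circulant_def by auto

lemma GL_circ:
  fixes K :: "'a::field set"
  assumes K: "is_subfield K" and n: "n > 0" and v: "v \<in> carrier_vec n" and vK: "\<forall>i<n. v$i \<in> K"
  shows "circulant n v \<in> GL_over K n \<longleftrightarrow> (\<exists>u\<in>carrier_vec n. (\<forall>i<n. u$i\<in>K) \<and> conv n v u = unit_vec n 0)"
proof
  assume "circulant n v \<in> GL_over K n"
  then obtain B where B: "B \<in> carrier_mat n n" "mat_over K B" "circulant n v * B = 1\<^sub>m n" "B * circulant n v = 1\<^sub>m n"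
    unfolding GL_over_def by blast
  define u where "u = vec_mat_mult (unit_vec n 0) B"
  have uc: "u \<in> carrier_vec n" using B by (simp add: u_def vec_mat_mult_def)
  have uK: "\<forall>i<n. u$i \<in> K"
  proof (intro allI impI)
    fix i assume i: "i<n"
    have "u $ i = (\<Sum>k<n. (if k = 0 then 1 else 0) * B $$ (k,i))"
      using B i n by (simp add: u_def vec_mat_mult_def scalar_prod_def col_def atLeast0LessThan)
    also have "\<dots> = (\<Sum>k<n. (if k = 0 then B $$ (k,i) else 0))"
      by (rule sum.cong) auto
    also have "\<dots> = B $$ (0,i)" using n by (simp add: sum.delta)
    finally show "u$i \<in> K" using B(1,2) i n unfolding mat_over_def by simp
  qed
  have "conv n u v = vec_mat_mult u (circulant n v)" using uc by (simp add: vmm_circ)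
  also have "\<dots> = vec_mat_mult (unit_vec n 0) (B * circulant n v)" unfolding u_def
  proof (rule vmm_assoc)
    show "dim_vec (unit_vec n 0 :: 'a vec) = dim_row B" using B by simp
    show "dim_col B = dim_row (circulant n v)" using B by (simp add: circulant_def)
  qed
  also have "\<dots> = unit_vec n 0" using B by (simp add: vmm_one)
  finally have cu: "conv n u v = unit_vec n 0" .
  have "conv n v u = unit_vec n 0" using cu by (simp add: conv_comm[of n v u])
  then show "\<exists>u\<in>carrier_vec n. (\<forall>i<n. u$i\<in>K) \<and> conv n v u = unit_vec n 0"
    using uc uK by blast
next
  assume "\<exists>u\<in>carrier_vec n. (\<forall>i<n. u$i\<in>K) \<and> conv n v u = unit_vec n 0"
  then obtain u where u: "u \<in> carrier_vec n" "\<forall>i<n. u$i\<in>K" "conv n v u = unit_vec n 0" by blast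
  have c1: "circulant n v * circulant n u = 1\<^sub>m n" unfolding circ_mult u(3) by (rule circ_unit[OF n])
  have c2: "circulant n u * circulant n v = 1\<^sub>m n" unfolding circ_mult conv_comm[of n u v] u(3) by (rule circ_unit[OF n])
  show "circulant n v \<in> GL_over K n"
    unfolding GL_over_def using c1 c2 mat_over_circ[OF vK] mat_over_circ[OF u(2)]
    by (auto simp: circulant_def)
qed

lemma count_classes:
  assumes fin: "finite A" and sub: "\<forall>x\<in>A. C x \<subseteq> A" and cd: "\<forall>x\<in>A. card (C x) = k"
    and refl: "\<forall>x\<in>A. x \<in> C x" and cls: "\<forall>x\<in>A. \<forall>y\<in>C x. C y = C x"
  shows "card A = k * card (C ` A)"
proof -
  have U: "\<Union>(C ` A) = A" using sub refl by blast
  have "k * card (C ` A) = card (\<Union>(C ` A))"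
  proof (rule card_partition)
    show "finite (C ` A)" using fin by simp
    show "finite (\<Union>(C ` A))" using U fin by simp
    show "\<And>c. c \<in> C ` A \<Longrightarrow> card c = k" using cd by auto
    show "\<And>c1 c2. c1 \<in> C ` A \<Longrightarrow> c2 \<in> C ` A \<Longrightarrow> c1 \<noteq> c2 \<Longrightarrow> c1 \<inter> c2 = {}"
    proof -
      fix c1 c2 assume "c1 \<in> C ` A" "c2 \<in> C ` A" "c1 \<noteq> c2"
      then obtain x y where xy: "x\<in>A" "y\<in>A" "c1 = C x" "c2 = C y" "C x \<noteq> C y" by blast
      show "c1 \<inter> c2 = {}"
      proof (rule ccontr)
        assume "c1 \<inter> c2 \<noteq> {}"
        then obtain z where "z \<in> C x" "z \<in> C y" using xy by blast
        then have "C z = C x" "C z = C y" using cls xy(1,2) by blast+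
        then show False using xy by simp
      qed
    qed
  qed
  then show ?thesis using U by simp
qed

lemma finite_carrier_vec: "finite (carrier_vec n :: 'a::finite vec set)"
proof -
  have "carrier_vec n \<subseteq> vec_of_list ` {xs :: 'a list. set xs \<subseteq> UNIV \<and> length xs = n}"
  proof
    fix v :: "'a vec" assume "v \<in> carrier_vec n"
    show "v \<in> vec_of_list ` {xs. set xs \<subseteq> UNIV \<and> length xs = n}"
    proof (rule image_eqI)
      show "v = vec_of_list (list_of_vec v)" by (simp add: vec_list)
      show "list_of_vec v \<in> {xs. set xs \<subseteq> UNIV \<and> length xs = n}" using \<open>v \<in> carrier_vec n\<close> by simp
    qed
  qed
  moreover have "finite {xs :: 'a list. set xs \<subseteq> UNIV \<and> length xs = n}"
    by (rule finite_lists_length_eq) simp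
  ultimately show ?thesis by (meson finite_imageI finite_subset)
qed


definition P1 :: "'a::field set \<Rightarrow> nat \<Rightarrow> 'a vec \<Rightarrow> bool" where
  "P1 K n v \<longleftrightarrow> (\<exists>a x. x \<in> carrier_vec n \<and> (\<forall>i<n. x$i \<in> K) \<and> v = a \<cdot>\<^sub>v x)"

lemma wt_char:
  fixes K :: "'a::field set"
  assumes K: "is_subfield K" and alpha: "\<alpha> \<notin> K" and span: "\<forall>z. \<exists>x\<in>K. \<exists>y\<in>K. z = x + y * \<alpha>"
    and v: "v \<in> carrier_vec n"
  shows "wt_over K v = 2 \<longleftrightarrow> \<not> P1 K n v"
proof
  assume w: "wt_over K v = 2"
  show "\<not> P1 K n v"
  proof
    assume "P1 K n v"
    then obtain a x where x: "x \<in> carrier_vec n" "\<forall>i<n. x$i \<in> K" "v = a \<cdot>\<^sub>v x" unfolding P1_def by blast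
    have "\<exists>B. finite B \<and> card B = 1 \<and> (\<forall>i<dim_vec v. v $ i \<in> K_span K B)"
    proof (intro exI conjI allI impI)
      show "finite {a}" "card {a} = 1" by auto
      fix i assume "i < dim_vec v"
      then have i: "i < n" using v by simp
      have vi: "v $ i = a * x $ i" using x(1,3) i by simp
      have "\<exists>c. v $ i = (\<Sum>b\<in>{a}. c b * b) \<and> (\<forall>b\<in>{a}. c b \<in> K)"
        using vi x(2) i by (intro exI[of _ "\<lambda>_. x $ i"]) (simp add: mult.commute)
      then show "v $ i \<in> K_span K {a}" unfolding K_span_def by (simp only: mem_Collect_eq)
    qed
    then have "wt_over K v \<le> 1" unfolding wt_over_def by (rule Least_le)
    then show False using w by simp
  qed
next
  assume nP: "\<not> P1 K n v"
  let ?Q = "\<lambda>d. \<exists>B. finite B \<and> card B = d \<and> (\<forall>i<dim_vec v. v $ i \<in> K_span K B)"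
  have one: "1 \<in> K" using K by (simp add: is_subfield_def)
  have a1: "(1::'a) \<noteq> \<alpha>" using one alpha by auto
  have Q2: "?Q 2"
  proof (intro exI conjI allI impI)
    show "finite {1, \<alpha>}" "card {1, \<alpha>} = 2" using a1 by auto
    fix i assume "i < dim_vec v"
    obtain x y where xy: "x \<in> K" "y \<in> K" "v $ i = x + y * \<alpha>" using span by blast
    define c :: "'a \<Rightarrow> 'a" where "c = (\<lambda>b. if b = 1 then x else y)"
    have "v $ i = (\<Sum>b\<in>{1, \<alpha>}. c b * b)" using a1 xy by (simp add: c_def)
    moreover have "\<forall>b\<in>{1,\<alpha>}. c b \<in> K" using xy by (simp add: c_def)
    ultimately show "v $ i \<in> K_span K {1, \<alpha>}" unfolding K_span_def
      by (intro CollectI exI[of _ c] conjI)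
  qed
  have zero_P1: "P1 K n v" if z: "\<forall>i<n. v $ i = 0"
  proof -
    have "v = 0 \<cdot>\<^sub>v (0\<^sub>v n)"
    proof (rule eq_vecI)
      show "dim_vec v = dim_vec (0 \<cdot>\<^sub>v (0\<^sub>v n) :: 'a vec)" using v by simp
      fix i assume "i < dim_vec (0 \<cdot>\<^sub>v (0\<^sub>v n) :: 'a vec)"
      then show "v $ i = (0 \<cdot>\<^sub>v (0\<^sub>v n)) $ i" using z by simp
    qed
    moreover have "\<forall>i<n. (0\<^sub>v n :: 'a vec) $ i \<in> K" using K by (simp add: is_subfield_def)
    ultimately show ?thesis unfolding P1_def
      by (intro exI[of _ 0] exI[of _ "0\<^sub>v n"] conjI) auto
  qed
  have notQ0: "\<not> ?Q 0"
  proof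
    assume "?Q 0"
    then obtain B where B: "finite B" "card B = 0" "\<forall>i<dim_vec v. v $ i \<in> K_span K B" by blast
    then have "B = {}" by simp
    then have "\<forall>i<n. v $ i = 0" using B(3) v unfolding K_span_def by auto
    then show False using zero_P1 nP by blast
  qed
  have notQ1: "\<not> ?Q 1"
  proof
    assume "?Q 1"
    then obtain B where B: "finite B" "card B = 1" "\<forall>i<dim_vec v. v $ i \<in> K_span K B" by blast
    then obtain b where b: "B = {b}" using card_1_singletonE by blast
    have vi: "\<forall>i<n. \<exists>c\<in>K. v $ i = c * b"
    proof (intro allI impI)
      fix i assume "i < n"
      then have "v $ i \<in> K_span K {b}" using B(3) b v by simp
      then show "\<exists>c\<in>K. v $ i = c * b" unfolding K_span_def by auto
    qed
    show False
    proof (cases "b = 0")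
      case True
      then have "\<forall>i<n. v $ i = 0" using vi by auto
      then show False using zero_P1 nP by blast
    next
      case False
      define x where "x = vec n (\<lambda>i. v $ i / b)"
      have "x \<in> carrier_vec n" by (simp add: x_def)
      moreover have "\<forall>i<n. x $ i \<in> K"
      proof (intro allI impI)
        fix i assume i: "i < n"
        then obtain c where "c \<in> K" "v $ i = c * b" using vi by blast
        then show "x $ i \<in> K" using i False by (simp add: x_def)
      qed
      moreover have "v = b \<cdot>\<^sub>v x" using v False by (intro eq_vecI) (auto simp: x_def)
      ultimately show False using nP unfolding P1_def by blast
    qed
  qed
  show "wt_over K v = 2" unfolding wt_over_def
  proof (rule Least_equality)
    show "?Q 2" by (rule Q2)
    fix d assume "?Q d"
    show "2 \<le> d"
    proof (rule ccontr)
      assume "\<not> 2 \<le> d"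
      then have "d = 0 \<or> d = 1" by auto
      then show False using notQ0 notQ1 \<open>?Q d\<close> by auto
    qed
  qed
qed




locale circ_setup =
  fixes K :: "'a::{field,finite} set" and n :: nat
  assumes K: "is_subfield K" and n: "n > 0"
begin

abbreviation e :: "'a vec" where "e \<equiv> unit_vec n 0"

definition U where "U = {v \<in> carrier_vec n. \<exists>u\<in>carrier_vec n. conv n v u = e}"
definition UK where "UK = {v \<in> carrier_vec n. (\<forall>i<n. v$i\<in>K) \<and> (\<exists>u\<in>carrier_vec n. (\<forall>i<n. u$i\<in>K) \<and> conv n v u = e)}"

lemma K0: "0 \<in> K" and K1: "1 \<in> K" using K by (auto simp: is_subfield_def)

lemma eK: "\<forall>i<n. e $ i \<in> K" using K0 K1 n by simp

lemma cdim: "v \<in> carrier_vec n \<Longrightarrow> dim_vec v = n" by (rule carrier_vecD)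

lemma conv_e_right: "v \<in> carrier_vec n \<Longrightarrow> conv n v e = v" using conv_unit[OF n] cdim by blast
lemma conv_e_left: "v \<in> carrier_vec n \<Longrightarrow> conv n e v = v" using conv_e_right[of v] conv_comm[of n e v] by simp

lemma e_carrier: "e \<in> carrier_vec n" by (simp add: carrier_vecI)
lemma e_UK: "e \<in> UK"
proof -
  have c: "conv n e e = e" by (rule conv_e_right[OF e_carrier])
  show ?thesis unfolding UK_def using eK c e_carrier by blast
qed
lemma UK_U: "UK \<subseteq> U" unfolding UK_def U_def by auto
lemma U_carrier: "U \<subseteq> carrier_vec n" unfolding U_def by auto
lemma UK_carrier: "UK \<subseteq> carrier_vec n" unfolding UK_def by auto
lemma finite_U: "finite U" using U_carrier finite_carrier_vec finite_subset by blast
lemma finite_UK: "finite UK" using UK_carrier finite_carrier_vec finite_subset by blast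

lemma four:
  assumes a: "a \<in> carrier_vec n" and b: "b\<in>carrier_vec n" and c: "c\<in>carrier_vec n"
  shows "conv n (conv n a b) (conv n c d) = conv n (conv n a c) (conv n b d)"
proof -
  have "conv n (conv n a b) (conv n c d) = conv n a (conv n b (conv n c d))" using a by (simp add: conv_assoc cdim)
  also have "\<dots> = conv n a (conv n (conv n b c) d)" using b by (simp add: conv_assoc cdim)
  also have "\<dots> = conv n a (conv n (conv n c b) d)" by (simp add: conv_comm[of n b c])
  also have "\<dots> = conv n a (conv n c (conv n b d))" using c by (simp add: conv_assoc cdim)
  also have "\<dots> = conv n (conv n a c) (conv n b d)" using a by (simp add: conv_assoc cdim)
  finally show ?thesis .
qed

lemma U_conv: assumes "v \<in> U" "w \<in> U" shows "conv n v w \<in> U"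
proof -
  obtain u u' where u: "u \<in> carrier_vec n" "conv n v u = e" "u' \<in> carrier_vec n" "conv n w u' = e"
    using assms unfolding U_def by blast
  have "conv n (conv n v w) (conv n u u') = conv n (conv n v u) (conv n w u')"
    using assms u U_carrier by (intro four) auto
  also have "\<dots> = e" using u conv_e_right[of e] n by simp
  finally show ?thesis unfolding U_def by auto
qed

lemma UK_conv: assumes "v \<in> UK" "w \<in> UK" shows "conv n v w \<in> UK"
proof -
  obtain u u' where u: "u \<in> carrier_vec n" "\<forall>i<n. u$i\<in>K" "conv n v u = e"
     "u' \<in> carrier_vec n" "\<forall>i<n. u'$i\<in>K" "conv n w u' = e"
    using assms unfolding UK_def by blast
  have "conv n (conv n v w) (conv n u u') = conv n (conv n v u) (conv n w u')"
    using assms u UK_carrier by (intro four) auto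
  also have "\<dots> = e" using u conv_e_right[of e] n by simp
  finally have "conv n (conv n v w) (conv n u u') = e" .
  moreover have "\<forall>i<n. conv n v w $ i \<in> K" "\<forall>i<n. conv n u u' $ i \<in> K"
    using assms u conv_overK[OF K] unfolding UK_def by blast+
  ultimately show ?thesis unfolding UK_def by auto
qed

lemma cancel:
  assumes v: "v \<in> U" and a: "a \<in> carrier_vec n" and b: "b \<in> carrier_vec n" and eq: "conv n v a = conv n v b"
  shows "a = b"
proof -
  obtain u where u: "u \<in> carrier_vec n" "conv n v u = e" using v unfolding U_def by blast
  have uv: "conv n u v = e" using u by (simp add: conv_comm[of n u v])
  have "a = conv n (conv n u v) a" using uv conv_e_left a by simp
  also have "\<dots> = conv n u (conv n v a)" using u by (simp add: conv_assoc cdim)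
  also have "\<dots> = conv n u (conv n v b)" using eq by simp
  also have "\<dots> = conv n (conv n u v) b" using u by (simp add: conv_assoc cdim)
  also have "\<dots> = b" using uv conv_e_left b by simp
  finally show ?thesis .
qed

lemma UK_inv: assumes "w \<in> UK" shows "\<exists>w'\<in>UK. conv n w w' = e"
proof -
  obtain u where u: "u \<in> carrier_vec n" "\<forall>i<n. u$i\<in>K" "conv n w u = e"
    using assms unfolding UK_def by blast
  have "conv n u w = e" using u by (simp add: conv_comm[of n u w])
  then have "u \<in> UK" using u assms unfolding UK_def by blast
  then show ?thesis using u by blast
qed

lemma UK_shift: assumes w: "w \<in> UK" shows "conv n w ` UK = UK"
proof
  show "conv n w ` UK \<subseteq> UK" using UK_conv w by blast
  show "UK \<subseteq> conv n w ` UK"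
  proof
    fix y assume y: "y \<in> UK"
    obtain w' where w': "w' \<in> UK" "conv n w w' = e" using UK_inv w by blast
    have "conv n w (conv n w' y) = conv n (conv n w w') y" using w UK_carrier by (simp add: conv_assoc cdim subset_iff)
    also have "\<dots> = y" using w'(2) conv_e_left[of y] y UK_carrier by auto
    finally have "y = conv n w (conv n w' y)" by simp
    then show "y \<in> conv n w ` UK" using UK_conv[OF w'(1) y] by (rule image_eqI)
  qed
qed

lemma eqc: assumes v: "v \<in> carrier_vec n" shows "eq_class K n v = conv n v ` UK"
proof -
  have GL: "\<And>w. w \<in> carrier_vec n \<Longrightarrow> (\<forall>i<n. w$i \<in> K) \<Longrightarrow>
      circulant n w \<in> GL_over K n \<longleftrightarrow> (\<exists>u\<in>carrier_vec n. (\<forall>i<n. u$i\<in>K) \<and> conv n w u = e)"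
    using GL_circ[OF K n] by blast
  have vm: "\<And>w. vec_mat_mult v (circulant n w) = conv n v w" using v by (simp add: vmm_circ cdim)
  show ?thesis
  proof
    show "eq_class K n v \<subseteq> conv n v ` UK"
    proof
      fix y assume "y \<in> eq_class K n v"
      then obtain w where w: "w \<in> carrier_vec n" "\<forall>i<n. w$i \<in> K" "circulant n w \<in> GL_over K n"
        "y = vec_mat_mult v (circulant n w)" unfolding eq_class_def by blast
      then have "w \<in> UK" using GL unfolding UK_def by blast
      then show "y \<in> conv n v ` UK" using w(4) vm by auto
    qed
    show "conv n v ` UK \<subseteq> eq_class K n v"
    proof
      fix y assume "y \<in> conv n v ` UK"
      then obtain w where w: "w \<in> UK" "y = conv n v w" by blast
      then have "w \<in> carrier_vec n" "\<forall>i<n. w$i \<in> K" "circulant n w \<in> GL_over K n"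
        using GL unfolding UK_def by blast+
      then have "y = vec_mat_mult v (circulant n w) \<and> (\<exists>w'\<in>carrier_vec n. (\<forall>i<n. w'$i \<in> K) \<and> circulant n w = circulant n w' \<and> circulant n w \<in> GL_over K n)"
        using w(2) vm by auto
      then show "y \<in> eq_class K n v" unfolding eq_class_def
        by (intro CollectI exI[of _ "circulant n w"])
    qed
  qed
qed

lemma main_count: "card U = card UK * card (eq_class K n ` U)"
proof (rule count_classes)
  show "finite U" by (rule finite_U)
  show "\<forall>x\<in>U. eq_class K n x \<subseteq> U"
  proof
    fix x assume x: "x \<in> U"
    have "eq_class K n x = conv n x ` UK" using x U_carrier by (intro eqc) auto
    also have "\<dots> \<subseteq> U"
    proof (rule image_subsetI)
      fix w assume "w \<in> UK"
      then show "conv n x w \<in> U" using U_conv[OF x] UK_U by auto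
    qed
    finally show "eq_class K n x \<subseteq> U" .
  qed
  show "\<forall>x\<in>U. card (eq_class K n x) = card UK"
  proof
    fix x assume x: "x \<in> U"
    have "inj_on (conv n x) UK"
    proof (rule inj_onI)
      fix a b assume "a \<in> UK" "b \<in> UK" "conv n x a = conv n x b"
      then show "a = b" using cancel[OF x] UK_carrier by auto
    qed
    moreover have "eq_class K n x = conv n x ` UK" using x U_carrier by (intro eqc) auto
    ultimately show "card (eq_class K n x) = card UK" by (simp add: card_image)
  qed
  show "\<forall>x\<in>U. x \<in> eq_class K n x"
  proof
    fix x assume x: "x \<in> U"
    then have "x = conv n x e" using conv_e_right U_carrier by auto
    moreover have "eq_class K n x = conv n x ` UK" using x U_carrier by (intro eqc) auto
    ultimately show "x \<in> eq_class K n x" using e_UK by auto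
  qed
  show "\<forall>x\<in>U. \<forall>y\<in>eq_class K n x. eq_class K n y = eq_class K n x"
  proof (intro ballI)
    fix x y assume x: "x \<in> U" and y: "y \<in> eq_class K n x"
    have xc: "x \<in> carrier_vec n" using x U_carrier by auto
    obtain w where w: "w \<in> UK" "y = conv n x w" using y eqc[OF xc] by blast
    have "eq_class K n y = conv n y ` UK" using w by (simp add: eqc)
    also have "\<dots> = (\<lambda>z. conv n x (conv n w z)) ` UK" using w xc by (simp add: conv_assoc cdim)
    also have "\<dots> = conv n x ` (conv n w ` UK)" by (simp add: image_image)
    also have "\<dots> = conv n x ` UK" using UK_shift[OF w(1)] by simp
    also have "\<dots> = eq_class K n x" using eqc[OF xc] by simp
    finally show "eq_class K n y = eq_class K n x" .
  qed
qed

end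


context circ_setup begin

lemma eqc_refl: assumes x: "x \<in> carrier_vec n" shows "x \<in> eq_class K n x"
proof -
  have "x = conv n x e" using conv_e_right[OF x] by simp
  moreover have "eq_class K n x = conv n x ` UK" by (rule eqc[OF x])
  ultimately show ?thesis using e_UK by auto
qed

lemma P1_conv: assumes v: "v \<in> carrier_vec n" "P1 K n v" and w: "w \<in> UK" shows "P1 K n (conv n v w)"
proof -
  obtain a x where x: "x \<in> carrier_vec n" "\<forall>i<n. x$i \<in> K" "v = a \<cdot>\<^sub>v x" using v(2) unfolding P1_def by auto
  have wc: "w \<in> carrier_vec n" "\<forall>i<n. w$i \<in> K" using w unfolding UK_def by auto
  have "conv n v w = a \<cdot>\<^sub>v conv n x w" using x by (simp add: conv_smult cdim)
  moreover have "conv n x w \<in> carrier_vec n" by simp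
  moreover have "\<forall>i<n. conv n x w $ i \<in> K" using conv_overK[OF K] x(2) wc(2) by blast
  ultimately show ?thesis unfolding P1_def by (intro exI[of _ a] exI[of _ "conv n x w"]) simp
qed

lemma smult_zero_not_U: assumes x: "x \<in> carrier_vec n" shows "(0::'a) \<cdot>\<^sub>v x \<notin> U"
proof
  assume "0 \<cdot>\<^sub>v x \<in> U"
  then obtain u where u: "u \<in> carrier_vec n" "conv n (0 \<cdot>\<^sub>v x) u = e" unfolding U_def by auto
  have "conv n (0 \<cdot>\<^sub>v x) u = 0 \<cdot>\<^sub>v conv n x u" using x by (simp add: conv_smult cdim)
  then have "(0 \<cdot>\<^sub>v conv n x u) $ 0 = e $ 0" using u by simp
  then show False using n by simp
qed

lemma x_UK: assumes aU: "a \<cdot>\<^sub>v x \<in> U" and x: "x \<in> carrier_vec n" and xK: "\<forall>i<n. x$i\<in>K" shows "x \<in> UK"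
proof -
  obtain u where u: "u\<in>carrier_vec n" "conv n (a \<cdot>\<^sub>v x) u = e" using aU unfolding U_def by auto
  have "conv n x (a \<cdot>\<^sub>v u) = conv n (a \<cdot>\<^sub>v u) x" by (rule conv_comm)
  also have "\<dots> = a \<cdot>\<^sub>v conv n u x" using u by (simp add: conv_smult cdim)
  also have "\<dots> = a \<cdot>\<^sub>v conv n x u" by (simp add: conv_comm[of n u x])
  also have "\<dots> = conv n (a \<cdot>\<^sub>v x) u" using x by (simp add: conv_smult cdim)
  also have "\<dots> = e" by (rule u(2))
  finally have "conv n x (a \<cdot>\<^sub>v u) = e" .
  then have xU: "x \<in> U" unfolding U_def using x u(1) by auto
  define KV where "KV = {y \<in> carrier_vec n. \<forall>i<n. y$i \<in> K}"
  have fin: "finite KV" unfolding KV_def using finite_carrier_vec by (rule rev_finite_subset) auto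
  have sub: "conv n x ` KV \<subseteq> KV" unfolding KV_def using conv_overK[OF K] xK by auto
  have inj: "inj_on (conv n x) KV"
  proof (rule inj_onI)
    fix a b assume "a \<in> KV" "b \<in> KV" "conv n x a = conv n x b"
    then show "a = b" using cancel[OF xU] unfolding KV_def by auto
  qed
  have eq: "conv n x ` KV = KV" by (rule endo_inj_surj[OF fin sub inj])
  have "e \<in> KV" unfolding KV_def using e_carrier eK by auto
  then have "e \<in> conv n x ` KV" using eq by simp
  then obtain y where "y\<in>KV" "e = conv n x y" by (rule imageE)
  then show "x \<in> UK" unfolding UK_def KV_def using x xK by auto
qed

definition g :: "'a \<Rightarrow> 'a vec set" where "g a = (\<lambda>w. a \<cdot>\<^sub>v w) ` UK"

lemma eqc_smult: assumes x: "x \<in> UK" shows "eq_class K n (a \<cdot>\<^sub>v x) = g a"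
proof -
  have xc: "x \<in> carrier_vec n" using x UK_carrier by auto
  have "eq_class K n (a \<cdot>\<^sub>v x) = conv n (a \<cdot>\<^sub>v x) ` UK" using xc by (intro eqc) simp
  also have "\<dots> = (\<lambda>w. a \<cdot>\<^sub>v w) ` (conv n x ` UK)" using xc by (simp add: image_image conv_smult cdim)
  also have "\<dots> = g a" using UK_shift[OF x] by (simp add: g_def)
  finally show ?thesis .
qed

lemma inv_smult: assumes a: "a \<noteq> 0" shows "a \<cdot>\<^sub>v (inverse a \<cdot>\<^sub>v v) = (v :: 'a vec)"
  using a by (simp add: smult_smult_assoc)

lemma ae_U: assumes a: "a \<noteq> 0" shows "a \<cdot>\<^sub>v e \<in> U" "P1 K n (a \<cdot>\<^sub>v e)"
proof -
  have "conv n (a \<cdot>\<^sub>v e) (inverse a \<cdot>\<^sub>v e) = a \<cdot>\<^sub>v conv n e (inverse a \<cdot>\<^sub>v e)"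
    by (simp add: conv_smult)
  also have "\<dots> = a \<cdot>\<^sub>v (inverse a \<cdot>\<^sub>v e)" using conv_e_left[of "inverse a \<cdot>\<^sub>v e"] e_carrier by simp
  also have "\<dots> = e" by (rule inv_smult[OF a])
  finally have "conv n (a \<cdot>\<^sub>v e) (inverse a \<cdot>\<^sub>v e) = e" .
  then show "a \<cdot>\<^sub>v e \<in> U" unfolding U_def using e_carrier by auto
  show "P1 K n (a \<cdot>\<^sub>v e)" unfolding P1_def using e_carrier eK by (intro exI[of _ a] exI[of _ e]) simp
qed

lemma W1_img: "eq_class K n ` {v \<in> U. P1 K n v} = g ` (UNIV - {0})"
proof (intro equalityI subsetI)
  fix y assume "y \<in> eq_class K n ` {v \<in> U. P1 K n v}"
  then obtain v where v: "v \<in> U" "P1 K n v" "y = eq_class K n v" by blast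
  obtain a x where x: "x \<in> carrier_vec n" "\<forall>i<n. x$i \<in> K" "v = a \<cdot>\<^sub>v x" using v(2) unfolding P1_def by auto
  have a: "a \<noteq> 0" using smult_zero_not_U[OF x(1)] v(1) x(3) by auto
  have "x \<in> UK" using x_UK[of a x] v(1) x by simp
  then have "y = g a" using v(3) x(3) eqc_smult by simp
  then show "y \<in> g ` (UNIV - {0})" using a by simp
next
  fix y assume "y \<in> g ` (UNIV - {0})"
  then obtain a where a: "a \<noteq> 0" "y = g a" by auto
  have "y = eq_class K n (a \<cdot>\<^sub>v e)" using a eqc_smult[OF e_UK] by simp
  then show "y \<in> eq_class K n ` {v \<in> U. P1 K n v}" using ae_U[OF a(1)] by blast
qed

lemma inverse_K: "k \<in> K \<Longrightarrow> k \<noteq> 0 \<Longrightarrow> inverse k \<in> K" using K by (simp add: is_subfield_def)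
lemma mult_K: "k \<in> K \<Longrightarrow> l \<in> K \<Longrightarrow> k * l \<in> K" using K by (simp add: is_subfield_def)

lemma smult_UK: assumes k: "k \<in> K" "k \<noteq> 0" and w: "w \<in> UK" shows "k \<cdot>\<^sub>v w \<in> UK"
proof -
  obtain w' where w': "w' \<in> UK" "conv n w w' = e" using UK_inv[OF w] by blast
  have wc: "w \<in> carrier_vec n" "\<forall>i<n. w$i \<in> K" using w unfolding UK_def by auto
  have wc': "w' \<in> carrier_vec n" "\<forall>i<n. w'$i \<in> K" using w'(1) unfolding UK_def by auto
  have "conv n (k \<cdot>\<^sub>v w) (inverse k \<cdot>\<^sub>v w') = k \<cdot>\<^sub>v conv n w (inverse k \<cdot>\<^sub>v w')"
    using wc by (simp add: conv_smult cdim)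
  also have "conv n w (inverse k \<cdot>\<^sub>v w') = conv n (inverse k \<cdot>\<^sub>v w') w" by (rule conv_comm)
  also have "\<dots> = inverse k \<cdot>\<^sub>v conv n w' w" using wc' by (simp add: conv_smult cdim)
  also have "conv n w' w = e" using w'(2) by (simp add: conv_comm[of n w' w])
  also have "k \<cdot>\<^sub>v (inverse k \<cdot>\<^sub>v e) = e" by (rule inv_smult[OF k(2)])
  finally have c: "conv n (k \<cdot>\<^sub>v w) (inverse k \<cdot>\<^sub>v w') = e" .
  have k1: "\<forall>i<n. (k \<cdot>\<^sub>v w) $ i \<in> K" using wc k mult_K by simp
  have k2: "\<forall>i<n. (inverse k \<cdot>\<^sub>v w') $ i \<in> K" using wc' k mult_K inverse_K by simp
  have ic: "inverse k \<cdot>\<^sub>v w' \<in> carrier_vec n" using wc'(1) by simp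
  have ex: "\<exists>u\<in>carrier_vec n. (\<forall>i<n. u $ i \<in> K) \<and> conv n (k \<cdot>\<^sub>v w) u = e"
    using ic k2 c by blast
  have kc: "k \<cdot>\<^sub>v w \<in> carrier_vec n" using wc(1) by simp
  show ?thesis unfolding UK_def using kc k1 ex by blast
qed

lemma smult_UK_img: assumes k: "k \<in> K" "k \<noteq> 0" shows "(\<lambda>w. k \<cdot>\<^sub>v w) ` UK = UK"
proof (intro equalityI subsetI)
  fix y assume "y \<in> (\<lambda>w. k \<cdot>\<^sub>v w) ` UK"
  then show "y \<in> UK" using smult_UK[OF k] by auto
next
  fix y assume y: "y \<in> UK"
  have "inverse k \<cdot>\<^sub>v y \<in> UK" using smult_UK[OF inverse_K[OF k] _ y] k by simp
  moreover have "y = k \<cdot>\<^sub>v (inverse k \<cdot>\<^sub>v y)" using inv_smult[OF k(2)] by simp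
  ultimately show "y \<in> (\<lambda>w. k \<cdot>\<^sub>v w) ` UK" by (rule rev_image_eqI)
qed

lemma fiber: assumes a: "a \<noteq> 0" shows "{b \<in> UNIV - {0}. g b = g a} = (\<lambda>k. a * k) ` (K - {0})"
proof (intro equalityI subsetI)
  fix b assume "b \<in> {b \<in> UNIV - {0}. g b = g a}"
  then have b: "b \<noteq> 0" "g b = g a" by auto
  have "b \<cdot>\<^sub>v e \<in> g b" unfolding g_def using e_UK by blast
  then have "b \<cdot>\<^sub>v e \<in> g a" using b by simp
  then obtain w where w: "w \<in> UK" "b \<cdot>\<^sub>v e = a \<cdot>\<^sub>v w" unfolding g_def by blast
  have wc: "w \<in> carrier_vec n" "\<forall>i<n. w$i \<in> K" using w(1) unfolding UK_def by auto
  have "(b \<cdot>\<^sub>v e) $ 0 = (a \<cdot>\<^sub>v w) $ 0" using w(2) by simp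
  then have bw: "b = a * w $ 0" using n wc(1) by simp
  have "w $ 0 \<in> K - {0}" using wc(2) n bw b(1) by auto
  then show "b \<in> (\<lambda>k. a * k) ` (K - {0})" using bw by blast
next
  fix b assume "b \<in> (\<lambda>k. a * k) ` (K - {0})"
  then obtain k where k: "k \<in> K" "k \<noteq> 0" "b = a * k" by auto
  have "g b = (\<lambda>w. a \<cdot>\<^sub>v w) ` ((\<lambda>w. k \<cdot>\<^sub>v w) ` UK)"
    unfolding g_def image_image k(3) by (simp add: smult_smult_assoc)
  also have "\<dots> = g a" using smult_UK_img[OF k(1,2)] by (simp add: g_def)
  finally show "b \<in> {b \<in> UNIV - {0}. g b = g a}" using k a by simp
qed

lemma card_fiber: assumes a: "a \<noteq> 0" shows "card {b \<in> UNIV - {0}. g b = g a} = card K - 1"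
proof -
  have "inj_on (\<lambda>k. a * k) (K - {0})" using a by (auto intro: inj_onI)
  then have "card ((\<lambda>k. a * k) ` (K - {0})) = card (K - {0})" by (rule card_image)
  also have "\<dots> = card K - 1" using K0 by (simp add: card_Diff_singleton)
  finally show ?thesis using fiber[OF a] by simp
qed

lemma W1_count: "card (UNIV :: 'a set) - 1 = (card K - 1) * card (g ` (UNIV - {0}))"
proof -
  define A where "A = (UNIV :: 'a set) - {0}"
  define C where "C = (\<lambda>a. {b \<in> A. g b = g a})"
  have "card A = (card K - 1) * card (C ` A)"
  proof (rule count_classes)
    show "finite A" by simp
    show "\<forall>x\<in>A. C x \<subseteq> A" unfolding C_def by auto
    show "\<forall>x\<in>A. card (C x) = card K - 1" unfolding C_def A_def using card_fiber by auto
    show "\<forall>x\<in>A. x \<in> C x" unfolding C_def by auto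
    show "\<forall>x\<in>A. \<forall>y\<in>C x. C y = C x" unfolding C_def by auto
  qed
  moreover have "card (C ` A) = card (g ` A)"
  proof -
    have "C ` A = (\<lambda>y. {b \<in> A. g b = y}) ` (g ` A)" unfolding C_def by (simp add: image_image)
    moreover have "inj_on (\<lambda>y. {b \<in> A. g b = y}) (g ` A)"
    proof (rule inj_onI)
      fix y1 y2 assume y: "y1 \<in> g ` A" "y2 \<in> g ` A" "{b \<in> A. g b = y1} = {b \<in> A. g b = y2}"
      then obtain a1 where a1: "a1 \<in> A" "y1 = g a1" by blast
      then have "a1 \<in> {b \<in> A. g b = y1}" by simp
      then have "a1 \<in> {b \<in> A. g b = y2}" using y(3) by simp
      then show "y1 = y2" using a1 by simp
    qed
    ultimately show ?thesis by (simp add: card_image)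
  qed
  moreover have "card A = card (UNIV :: 'a set) - 1" unfolding A_def by (simp add: card_Diff_singleton)
  ultimately show ?thesis unfolding A_def by simp
qed

end


lemma span_lemma:
  fixes K :: "'a::{field,finite} set"
  assumes K: "is_subfield K" and alpha: "\<alpha> \<notin> K" and cU: "card (UNIV :: 'a set) = card K * card K"
  shows "\<forall>z. \<exists>x\<in>K. \<exists>y\<in>K. z = x + y * \<alpha>"
proof -
  define f where "f = (\<lambda>(x::'a, y::'a). x + y * \<alpha>)"
  have inj: "inj_on f (K \<times> K)"
  proof (rule inj_onI)
    fix p1 p2 assume p: "p1 \<in> K \<times> K" "p2 \<in> K \<times> K" "f p1 = f p2"
    obtain x y x' y' where xy: "p1 = (x,y)" "p2 = (x',y')" by (cases p1, cases p2) auto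
    have in1: "x \<in> K" "y \<in> K" "x' \<in> K" "y' \<in> K" using p xy by auto
    have eq: "x + y * \<alpha> = x' + y' * \<alpha>" using p(3) xy by (simp add: f_def)
    have "y = y'"
    proof (rule ccontr)
      assume ne: "y \<noteq> y'"
      have "(y - y') * \<alpha> = x' - x" using eq by (simp add: algebra_simps)
      then have "\<alpha> = (x' - x) * inverse (y - y')" using ne by (simp add: field_simps)
      moreover have "x' - x \<in> K" "y - y' \<in> K" using K in1 by (auto simp: is_subfield_def)
      moreover have "inverse (y - y') \<in> K" using K \<open>y - y' \<in> K\<close> ne by (simp add: is_subfield_def)
      ultimately have "\<alpha> \<in> K" using K by (simp add: is_subfield_def)
      then show False using alpha by simp
    qed
    then have "x = x'" using eq by simp
    then show "p1 = p2" using xy \<open>y = y'\<close> by simp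
  qed
  have "card (f ` (K \<times> K)) = card K * card K" using inj by (simp add: card_image card_cartesian_product)
  then have "f ` (K \<times> K) = UNIV" using cU by (intro card_subset_eq) auto
  then show ?thesis unfolding f_def by force
qed

theorem proposition7:
  fixes K :: "'a::{field,finite} set" and q m n :: nat
  assumes "\<exists>p k. prime p \<and> 0 < k \<and> q = p ^ k"
    and "0 < m" and "n = 2 * m"
    and "card (UNIV :: 'a set) = q ^ n"
    and "is_subfield K" and "card K = q ^ m"
  defines "S1 \<equiv> {v \<in> carrier_vec n. circulant n v \<in> GL_over (UNIV :: 'a set) n}"
    and "S2 \<equiv> {v \<in> carrier_vec n. (\<forall>i<n. v $ i \<in> K) \<and> circulant n v \<in> GL_over K n}"
    and "T \<equiv> {v \<in> carrier_vec n. wt_over K v = 2 \<and> circulant n v \<in> GL_over (UNIV :: 'a set) n}"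
  shows "real (card (eq_class K n ` T)) = real (card S1) / real (card S2) - real q ^ m - 1"
proof -
  obtain p k where pk: "prime p" "0 < k" "q = p ^ k" using assms(1) by blast
  have p2: "p \<ge> 2" using pk(1) by (rule prime_ge_2_nat)
  have "p ^ 1 \<le> p ^ k" using pk(2) p2 by (intro power_increasing) auto
  then have q2: "q \<ge> 2" using p2 pk(3) by simp
  have n0: "n > 0" using assms(2,3) by simp
  interpret circ_setup K n using assms(5) n0 by unfold_locales
  have "q ^ 1 \<le> q ^ m" using assms(2) q2 by (intro power_increasing) auto
  then have cK2: "card K \<ge> 2" using assms(6) q2 by simp
  have cU: "card (UNIV :: 'a set) = card K * card K"
    using assms(3,4,6) by (simp add: mult_2 power_add)
  have "card K < card (UNIV :: 'a set)" using cU cK2 by simp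
  then obtain \<alpha> where alpha: "\<alpha> \<notin> K" by (metis UNIV_eq_I less_irrefl)
  have span: "\<forall>z. \<exists>x\<in>K. \<exists>y\<in>K. z = x + y * \<alpha>" by (rule span_lemma[OF assms(5) alpha cU])
  have S1U': "\<And>v. v \<in> S1 \<longleftrightarrow> v \<in> U"
  proof -
    fix v
    show "v \<in> S1 \<longleftrightarrow> v \<in> U"
    proof (cases "v \<in> carrier_vec n")
      case True
      then show ?thesis unfolding S1_def U_def using GL_circ[OF subfield_UNIV n0 True] by simp
    next
      case False
      then show ?thesis unfolding S1_def U_def by simp
    qed
  qed
  have S1U: "S1 = U" using S1U' by blast
  have S2UK': "\<And>v. v \<in> S2 \<longleftrightarrow> v \<in> UK"
  proof -
    fix v
    show "v \<in> S2 \<longleftrightarrow> v \<in> UK"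
    proof (cases "v \<in> carrier_vec n \<and> (\<forall>i<n. v $ i \<in> K)")
      case True
      then show ?thesis unfolding S2_def UK_def using GL_circ[OF assms(5) n0] by auto
    next
      case False
      then show ?thesis unfolding S2_def UK_def by auto
    qed
  qed
  have S2UK: "S2 = UK" using S2UK' by blast
  have TU': "\<And>v. v \<in> T \<longleftrightarrow> v \<in> {v \<in> U. \<not> P1 K n v}"
  proof -
    fix v
    show "v \<in> T \<longleftrightarrow> v \<in> {v \<in> U. \<not> P1 K n v}"
    proof (cases "v \<in> carrier_vec n")
      case True
      have "v \<in> T \<longleftrightarrow> v \<in> S1 \<and> wt_over K v = 2" unfolding T_def S1_def by auto
      then show ?thesis using S1U wt_char[OF assms(5) alpha span True] by simp
    next
      case False
      then show ?thesis unfolding T_def using U_carrier by auto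
    qed
  qed
  have TU: "T = {v \<in> U. \<not> P1 K n v}" using TU' by blast
  define W1 where "W1 = {v \<in> U. P1 K n v}"
  have Uun: "U = T \<union> W1" unfolding TU W1_def by auto
  have disj: "eq_class K n ` T \<inter> eq_class K n ` W1 = {}"
  proof (rule ccontr)
    assume "eq_class K n ` T \<inter> eq_class K n ` W1 \<noteq> {}"
    then obtain t w where tw: "t \<in> T" "w \<in> W1" "eq_class K n t = eq_class K n w" by auto
    have tc: "t \<in> carrier_vec n" and wc: "w \<in> carrier_vec n"
      using tw(1,2) U_carrier unfolding TU W1_def by auto
    have "t \<in> eq_class K n w" using eqc_refl[OF tc] tw(3) by simp
    then obtain x where x: "x \<in> UK" "t = conv n w x" using eqc[OF wc] by auto
    have "P1 K n t" using P1_conv[OF wc _ x(1)] x(2) tw(2) unfolding W1_def by simp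
    then show False using tw(1) unfolding TU by simp
  qed
  have finU: "finite U" by (rule finite_U)
  have finT: "finite T" "finite W1" using finU unfolding TU W1_def by auto
  have cardN: "card (eq_class K n ` U) = card (eq_class K n ` T) + card (eq_class K n ` W1)"
    unfolding Uun image_Un using finT disj by (simp add: card_Un_disjoint)
  have N1: "card (eq_class K n ` W1) = card K + 1"
  proof -
    have h: "card K * card K - 1 = (card K - 1) * card (eq_class K n ` W1)"
      using W1_count W1_img cU unfolding W1_def by simp
    have "card K * card K - 1 = (card K - 1) * (card K + 1)" using cK2
      by (simp add: algebra_simps)
    then have eq: "(card K - 1) * card (eq_class K n ` W1) = (card K - 1) * (card K + 1)" using h by simp
    have ne: "card K - 1 \<noteq> 0" using cK2 by simp
    show ?thesis using mult_left_cancel[OF ne] eq by blast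
  qed
  have main: "card U = card UK * card (eq_class K n ` U)" by (rule main_count)
  have pos: "card UK > 0" using finite_UK e_UK card_gt_0_iff by blast
  have "real (card S1) / real (card S2) = real (card (eq_class K n ` U))"
    using main pos unfolding S1U S2UK by (simp add: field_simps)
  also have "\<dots> = real (card (eq_class K n ` T)) + real q ^ m + 1"
    using cardN N1 assms(6) by simp
  finally show ?thesis by simp
qed


end
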